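(* Let $F,F'$ be topological hyperfields, $F''$ a hyperfield, and $f:F\to F''$, $f':F'\to F''$ hyperfield morphisms. Let $*\in\{s,w\}$ and $M\in\operatorname{Gr}^*(r,F''^n)$. Suppose $H:F_0\times[0,1]\to F'_0$ is a hyperfield homotopy with $f'(H(x,t))=f(x)$ for all $x\in F$ and $t\in[0,1]$. Then $([\varphi],t)\mapsto[H_t\circ\varphi]$ defines a continuous map (homotopy) $$\operatorname{Real}^*_F(M)\times[0,1]\to\operatorname{Real}^*_{F'}(M).$$
   Context: Hyperfields. A hyperfield $(F,\odot,\boxplus,1,0)$ has the following data and axioms. - $\odot$ is a commutative multiplication and $\boxplus$ is a hyperaddition assigning to each $x,y$ a nonempty subset $x\boxplus y\subseteq F$ (extended to subsets by unions). - $\boxplus$ is commutative and associative, and $x\boxplus 0=\{x\}$. - Each $x$ has a unique $-x$ with $0\in x\boxplus(-x)$, and $x\in y\boxplus z \iff z\in x\boxplus(-y)$. - $(F\setminus\{0\},\odot,1)$ is an abelian group $F^\times$, $0\odot x=0$, and $x\odot(y\boxplus z)=(x\odot y)\boxplus(x\odot z)$. A homomorphism (morphism) $h$ satisfies $h(0)=0$, $h(1)=1$, $h(xy)=h(x)h(y)$ and $h(x\boxplus y)\subseteq h(x)\boxplus h(y)$. Topological hyperfields. A topological hyperfield is a hyperfield with a topology $T$ in which $F\setminus\{0\}$ is open, multiplication is continuous, and inversion on $F^\times$ is continuous. $F_0$ is $F$ with the 0-coarse topology, whose open sets are $F$ and all $U\in T$ with $0\notin U$. A hyperfield homotopy is a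 continuous $H:F\times[0,1]\to F'$ with each $H_t=H(\cdot,t)$ a hyperfield homomorphism. Grassmannians. A strong Grassmann–Plücker (GP) function of rank $r$ on $E=\{1,\dots,n\}$ is a function $\varphi:E^r\to F$ with the following properties. - $\varphi$ is not identically $0$. - $\varphi$ is alternating. - For all $(i_1,\dots,i_{r+1})\in E^{r+1}$ and $(j_1,\dots,j_{r-1})\in E^{r-1}$: $$0\in\boxplus_{k=1}^{r+1}(-1)^k\varphi(i_1,\dots,\widehat{i_k},\dots,i_{r+1})\odot\varphi(i_k,j_1,\dots,j_{r-1}).$$ A weak GP function is a function $\varphi:E^r\to F$ with the following properties. - $\varphi$ is nonzero and alternating. - Its support is the set of bases of a matroid. - The relation holds whenever $|\{i\}\setminus\{j\}|=3$. $\operatorname{Gr}^s(r,F^n)$ and $\operatorname{Gr}^w(r,F^n)$ are the sets of classes of strong, resp. weak, GP functions modulo $\varphi\sim\alpha\varphi$, $\alpha\in F^\times$. For topological $F$ they have the subspace topology of $(F^{E^r}\setminus\{0\})/F^\times$, which carries the product and quotient topologies. Realization spaces. A morphism $f$ induces $\operatorname{Gr}^*(f):[\varphi]\mapsto[f\circ\varphi]$. For $M\in\operatorname{Gr}^*(r,F''^n)$, the realization space $\operatorname{Real}^*_F(M)=\operatorname{Gr}^*(f)^{-1}(M)\subseteq\operatorname{Gr}^*(r,F^n)$ has the subspace topology, computed with the given topology of $F$. *)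

theory Defs
  imports "HOL-Analysis.Analysis" "HOL-Combinatorics.Permutations"
begin

record 'a hyperfield =
  hf_carrier :: "'a set"
  hf_mul :: "'a \<Rightarrow> 'a \<Rightarrow> 'a"
  hf_add :: "'a \<Rightarrow> 'a \<Rightarrow> 'a set"
  hf_one :: 'a
  hf_zero :: 'a

definition hf_addset :: "('a, 'm) hyperfield_scheme \<Rightarrow> 'a set \<Rightarrow> 'a set \<Rightarrow> 'a set" where
  "hf_addset F A B = (\<Union>x\<in>A. \<Union>y\<in>B. hf_add F x y)"

definition hyperfield :: "('a, 'm) hyperfield_scheme \<Rightarrow> bool" where
  "hyperfield F \<longleftrightarrow>
     (let K = hf_carrier F; z = hf_zero F; e = hf_one F in
      z \<in> K \<and> e \<in> K \<and> e \<noteq> z \<and>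
      (\<forall>x\<in>K. \<forall>y\<in>K. hf_mul F x y \<in> K) \<and>
      (\<forall>x\<in>K. \<forall>y\<in>K. hf_add F x y \<noteq> {} \<and> hf_add F x y \<subseteq> K) \<and>
      (\<forall>x\<in>K. \<forall>y\<in>K. hf_add F x y = hf_add F y x) \<and>
      (\<forall>x\<in>K. \<forall>y\<in>K. \<forall>w\<in>K.
          hf_addset F (hf_add F x y) {w} = hf_addset F {x} (hf_add F y w)) \<and>
      (\<forall>x\<in>K. hf_add F x z = {x}) \<and>
      (\<forall>x\<in>K. \<exists>!y. y \<in> K \<and> z \<in> hf_add F x y) \<and>
      (\<forall>x\<in>K. \<forall>y\<in>K. \<forall>w\<in>K. \<forall>ny\<in>K. z \<in> hf_add F y ny \<longrightarrow>
          (x \<in> hf_add F y w \<longleftrightarrow> w \<in> hf_add F x ny)) \<and>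
      (\<forall>x\<in>K. \<forall>y\<in>K. hf_mul F x y = hf_mul F y x) \<and>
      (\<forall>x\<in>K. \<forall>y\<in>K. \<forall>w\<in>K. hf_mul F (hf_mul F x y) w = hf_mul F x (hf_mul F y w)) \<and>
      (\<forall>x\<in>K - {z}. \<forall>y\<in>K - {z}. hf_mul F x y \<noteq> z) \<and>
      (\<forall>x\<in>K. hf_mul F e x = x) \<and>
      (\<forall>x\<in>K - {z}. \<exists>y\<in>K - {z}. hf_mul F x y = e) \<and>
      (\<forall>x\<in>K. hf_mul F z x = z) \<and>
      (\<forall>x\<in>K. \<forall>y\<in>K. \<forall>w\<in>K.
          hf_mul F x ` hf_add F y w = hf_add F (hf_mul F x y) (hf_mul F x w)))"

definition hf_neg :: "('a, 'm) hyperfield_scheme \<Rightarrow> 'a \<Rightarrow> 'a" where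
  "hf_neg F x = (THE y. y \<in> hf_carrier F \<and> hf_zero F \<in> hf_add F x y)"

definition hf_inv :: "('a, 'm) hyperfield_scheme \<Rightarrow> 'a \<Rightarrow> 'a" where
  "hf_inv F x = (THE y. y \<in> hf_carrier F \<and> hf_mul F x y = hf_one F)"

definition hf_signpow :: "('a, 'm) hyperfield_scheme \<Rightarrow> nat \<Rightarrow> 'a" where
  "hf_signpow F k = (if even k then hf_one F else hf_neg F (hf_one F))"

definition hf_sign :: "('a, 'm) hyperfield_scheme \<Rightarrow> (nat \<Rightarrow> nat) \<Rightarrow> 'a" where
  "hf_sign F \<sigma> = (if sign \<sigma> = 1 then hf_one F else hf_neg F (hf_one F))"

fun hf_sum :: "('a, 'm) hyperfield_scheme \<Rightarrow> 'a list \<Rightarrow> 'a set" where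
  "hf_sum F [] = {hf_zero F}"
| "hf_sum F (x # xs) = hf_addset F {x} (hf_sum F xs)"

definition hf_hom :: "('a, 'm) hyperfield_scheme \<Rightarrow> ('b, 'n) hyperfield_scheme \<Rightarrow> ('a \<Rightarrow> 'b) \<Rightarrow> bool" where
  "hf_hom F F' h \<longleftrightarrow>
     h ` hf_carrier F \<subseteq> hf_carrier F' \<and>
     h (hf_zero F) = hf_zero F' \<and> h (hf_one F) = hf_one F' \<and>
     (\<forall>x\<in>hf_carrier F. \<forall>y\<in>hf_carrier F. h (hf_mul F x y) = hf_mul F' (h x) (h y)) \<and>
     (\<forall>x\<in>hf_carrier F. \<forall>y\<in>hf_carrier F. h ` hf_add F x y \<subseteq> hf_add F' (h x) (h y))"

definition topological_hyperfield :: "('a, 'm) hyperfield_scheme \<Rightarrow> 'a topology \<Rightarrow> bool" where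
  "topological_hyperfield F T \<longleftrightarrow>
     hyperfield F \<and> topspace T = hf_carrier F \<and>
     openin T (hf_carrier F - {hf_zero F}) \<and>
     continuous_map (prod_topology T T) T (\<lambda>(x, y). hf_mul F x y) \<and>
     continuous_map (subtopology T (hf_carrier F - {hf_zero F}))
                    (subtopology T (hf_carrier F - {hf_zero F})) (hf_inv F)"

definition zero_coarse :: "('a, 'm) hyperfield_scheme \<Rightarrow> 'a topology \<Rightarrow> 'a topology" where
  "zero_coarse F T = topology (\<lambda>U. U = topspace T \<or> (openin T U \<and> hf_zero F \<notin> U))"

definition tuples :: "nat \<Rightarrow> nat \<Rightarrow> nat list set" where
  "tuples r n = {xs. length xs = r \<and> set xs \<subseteq> {1..n}}"

definition hf_funs :: "('a, 'm) hyperfield_scheme \<Rightarrow> nat \<Rightarrow> nat \<Rightarrow> (nat list \<Rightarrow> 'a) set" where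
  "hf_funs F r n = (tuples r n \<rightarrow>\<^sub>E hf_carrier F)"

definition alternating :: "('a, 'm) hyperfield_scheme \<Rightarrow> nat \<Rightarrow> nat \<Rightarrow> (nat list \<Rightarrow> 'a) \<Rightarrow> bool" where
  "alternating F r n \<phi> \<longleftrightarrow>
     (\<forall>xs\<in>tuples r n. \<not> distinct xs \<longrightarrow> \<phi> xs = hf_zero F) \<and>
     (\<forall>xs\<in>tuples r n. \<forall>\<sigma>. \<sigma> permutes {..<r} \<longrightarrow>
        \<phi> (permute_list \<sigma> xs) = hf_mul F (hf_sign F \<sigma>) (\<phi> xs))"

text \<open>The Grassmann-Pluecker relation for \<open>(i_1..i_{r+1})\<close> and \<open>(j_1..j_{r-1})\<close>
  (list positions are 0-based, so the \<open>k\<close>-th term carries \<open>(-1)^(k+1)\<close>).\<close>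
definition gp_relation :: "('a, 'm) hyperfield_scheme \<Rightarrow> (nat list \<Rightarrow> 'a) \<Rightarrow> nat list \<Rightarrow> nat list \<Rightarrow> bool" where
  "gp_relation F \<phi> is js \<longleftrightarrow>
     hf_zero F \<in> hf_sum F
       (map (\<lambda>k. hf_mul F (hf_signpow F (k + 1))
                   (hf_mul F (\<phi> (take k is @ drop (Suc k) is)) (\<phi> ((is ! k) # js))))
            [0..<length is])"

definition strong_GP :: "('a, 'm) hyperfield_scheme \<Rightarrow> nat \<Rightarrow> nat \<Rightarrow> (nat list \<Rightarrow> 'a) \<Rightarrow> bool" where
  "strong_GP F r n \<phi> \<longleftrightarrow>
     \<phi> \<in> hf_funs F r n \<and>
     (\<exists>xs\<in>tuples r n. \<phi> xs \<noteq> hf_zero F) \<and>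
     alternating F r n \<phi> \<and>
     (\<forall>is js. length is = r + 1 \<and> set is \<subseteq> {1..n} \<and> length js + 1 = r \<and> set js \<subseteq> {1..n}
        \<longrightarrow> gp_relation F \<phi> is js)"

definition matroid_bases :: "'e set \<Rightarrow> 'e set set \<Rightarrow> bool" where
  "matroid_bases E \<B> \<longleftrightarrow>
     \<B> \<noteq> {} \<and> (\<forall>B\<in>\<B>. B \<subseteq> E) \<and>
     (\<forall>B1\<in>\<B>. \<forall>B2\<in>\<B>. \<forall>x\<in>B1 - B2. \<exists>y\<in>B2 - B1. insert y (B1 - {x}) \<in> \<B>)"

definition weak_GP :: "('a, 'm) hyperfield_scheme \<Rightarrow> nat \<Rightarrow> nat \<Rightarrow> (nat list \<Rightarrow> 'a) \<Rightarrow> bool" where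
  "weak_GP F r n \<phi> \<longleftrightarrow>
     \<phi> \<in> hf_funs F r n \<and>
     (\<exists>xs\<in>tuples r n. \<phi> xs \<noteq> hf_zero F) \<and>
     alternating F r n \<phi> \<and>
     matroid_bases {1..n} {set xs | xs. xs \<in> tuples r n \<and> \<phi> xs \<noteq> hf_zero F} \<and>
     (\<forall>is js. length is = r + 1 \<and> set is \<subseteq> {1..n} \<and> length js + 1 = r \<and> set js \<subseteq> {1..n}
        \<and> card (set is - set js) = 3
        \<longrightarrow> gp_relation F \<phi> is js)"

datatype gp_kind = Strong | Weak

definition GP :: "gp_kind \<Rightarrow> ('a, 'm) hyperfield_scheme \<Rightarrow> nat \<Rightarrow> nat \<Rightarrow> (nat list \<Rightarrow> 'a) \<Rightarrow> bool" where
  "GP k F r n \<phi> = (case k of Strong \<Rightarrow> strong_GP F r n \<phi> | Weak \<Rightarrow> weak_GP F r n \<phi>)"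

definition gp_class :: "('a, 'm) hyperfield_scheme \<Rightarrow> nat \<Rightarrow> nat \<Rightarrow> (nat list \<Rightarrow> 'a) \<Rightarrow> (nat list \<Rightarrow> 'a) set" where
  "gp_class F r n \<phi> =
     {restrict (\<lambda>xs. hf_mul F \<alpha> (\<phi> xs)) (tuples r n) | \<alpha>. \<alpha> \<in> hf_carrier F - {hf_zero F}}"

definition Gr :: "gp_kind \<Rightarrow> ('a, 'm) hyperfield_scheme \<Rightarrow> nat \<Rightarrow> nat \<Rightarrow> (nat list \<Rightarrow> 'a) set set" where
  "Gr k F r n = gp_class F r n ` {\<phi>. GP k F r n \<phi>}"

definition quotient_topology :: "'x topology \<Rightarrow> ('x \<Rightarrow> 'y) \<Rightarrow> 'y topology" where
  "quotient_topology X q =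
     topology (\<lambda>U. U \<subseteq> q ` topspace X \<and> openin X {x \<in> topspace X. q x \<in> U})"

definition proj_space_top :: "('a, 'm) hyperfield_scheme \<Rightarrow> 'a topology \<Rightarrow> nat \<Rightarrow> nat \<Rightarrow> (nat list \<Rightarrow> 'a) set topology" where
  "proj_space_top F T r n =
     quotient_topology
       (subtopology (product_topology (\<lambda>_. T) (tuples r n))
          (hf_funs F r n - {restrict (\<lambda>_. hf_zero F) (tuples r n)}))
       (gp_class F r n)"

definition Gr_top :: "gp_kind \<Rightarrow> ('a, 'm) hyperfield_scheme \<Rightarrow> 'a topology \<Rightarrow> nat \<Rightarrow> nat \<Rightarrow> (nat list \<Rightarrow> 'a) set topology" where
  "Gr_top k F T r n = subtopology (proj_space_top F T r n) (Gr k F r n)"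

definition gp_comp :: "nat \<Rightarrow> nat \<Rightarrow> ('a \<Rightarrow> 'b) \<Rightarrow> (nat list \<Rightarrow> 'a) \<Rightarrow> (nat list \<Rightarrow> 'b)" where
  "gp_comp r n h \<phi> = restrict (h \<circ> \<phi>) (tuples r n)"

definition Real_set :: "gp_kind \<Rightarrow> ('a, 'm) hyperfield_scheme \<Rightarrow> ('c, 'o) hyperfield_scheme \<Rightarrow> ('a \<Rightarrow> 'c) \<Rightarrow> nat \<Rightarrow> nat \<Rightarrow> (nat list \<Rightarrow> 'c) set \<Rightarrow> (nat list \<Rightarrow> 'a) set set" where
  "Real_set k F F'' f r n M =
     {C \<in> Gr k F r n. \<forall>\<phi>\<in>C. gp_class F'' r n (gp_comp r n f \<phi>) = M}"

definition Real_top :: "gp_kind \<Rightarrow> ('a, 'm) hyperfield_scheme \<Rightarrow> 'a topology \<Rightarrow> ('c, 'o) hyperfield_scheme \<Rightarrow> ('a \<Rightarrow> 'c) \<Rightarrow> nat \<Rightarrow> nat \<Rightarrow> (nat list \<Rightarrow> 'c) set \<Rightarrow> (nat list \<Rightarrow> 'a) set topology" where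
  "Real_top k F T F'' f r n M = subtopology (Gr_top k F T r n) (Real_set k F F'' f r n M)"

end

theory Submission
  imports Defs
begin

lemma hfD:
  assumes "hyperfield F"
  shows "hf_zero F \<in> hf_carrier F" "hf_one F \<in> hf_carrier F" "hf_one F \<noteq> hf_zero F"
   "\<And>x y. x\<in>hf_carrier F \<Longrightarrow> y\<in>hf_carrier F \<Longrightarrow> hf_mul F x y \<in> hf_carrier F"
   "\<And>x y. x\<in>hf_carrier F \<Longrightarrow> y\<in>hf_carrier F \<Longrightarrow> hf_add F x y \<subseteq> hf_carrier F"
   "\<And>x. x\<in>hf_carrier F \<Longrightarrow> \<exists>!y. y \<in> hf_carrier F \<and> hf_zero F \<in> hf_add F x y"
   "\<And>x y. x\<in>hf_carrier F \<Longrightarrow> y\<in>hf_carrier F \<Longrightarrow> hf_mul F x y = hf_mul F y x"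
   "\<And>x y w. x\<in>hf_carrier F \<Longrightarrow> y\<in>hf_carrier F \<Longrightarrow> w\<in>hf_carrier F \<Longrightarrow> hf_mul F (hf_mul F x y) w = hf_mul F x (hf_mul F y w)"
   "\<And>x y. x\<in>hf_carrier F \<Longrightarrow> y\<in>hf_carrier F \<Longrightarrow> x \<noteq> hf_zero F \<Longrightarrow> y \<noteq> hf_zero F \<Longrightarrow> hf_mul F x y \<noteq> hf_zero F"
   "\<And>x. x\<in>hf_carrier F \<Longrightarrow> hf_mul F (hf_one F) x = x"
   "\<And>x. x\<in>hf_carrier F \<Longrightarrow> x \<noteq> hf_zero F \<Longrightarrow> \<exists>y\<in>hf_carrier F - {hf_zero F}. hf_mul F x y = hf_one F"
   "\<And>x. x\<in>hf_carrier F \<Longrightarrow> hf_mul F (hf_zero F) x = hf_zero F"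
  proof -
  note a = assms[unfolded hyperfield_def Let_def]
  show "hf_zero F \<in> hf_carrier F" "hf_one F \<in> hf_carrier F" "hf_one F \<noteq> hf_zero F" using a by auto
  show "\<And>x y. x\<in>hf_carrier F \<Longrightarrow> y\<in>hf_carrier F \<Longrightarrow> hf_mul F x y \<in> hf_carrier F" using a by auto
  show "\<And>x y. x\<in>hf_carrier F \<Longrightarrow> y\<in>hf_carrier F \<Longrightarrow> hf_add F x y \<subseteq> hf_carrier F" using a by auto
  show "\<And>x. x\<in>hf_carrier F \<Longrightarrow> \<exists>!y. y \<in> hf_carrier F \<and> hf_zero F \<in> hf_add F x y" using a by auto
  show "\<And>x y. x\<in>hf_carrier F \<Longrightarrow> y\<in>hf_carrier F \<Longrightarrow> hf_mul F x y = hf_mul F y x"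
  proof -
    fix x y assume "x\<in>hf_carrier F" "y\<in>hf_carrier F"
    moreover have "\<forall>x\<in>hf_carrier F. \<forall>y\<in>hf_carrier F. hf_mul F x y = hf_mul F y x" using a by (elim conjE)
    ultimately show "hf_mul F x y = hf_mul F y x" by blast
  qed
  show "\<And>x y w. x\<in>hf_carrier F \<Longrightarrow> y\<in>hf_carrier F \<Longrightarrow> w\<in>hf_carrier F \<Longrightarrow> hf_mul F (hf_mul F x y) w = hf_mul F x (hf_mul F y w)"
  proof -
    fix x y w assume "x\<in>hf_carrier F" "y\<in>hf_carrier F" "w\<in>hf_carrier F"
    moreover have "\<forall>x\<in>hf_carrier F. \<forall>y\<in>hf_carrier F. \<forall>w\<in>hf_carrier F. hf_mul F (hf_mul F x y) w = hf_mul F x (hf_mul F y w)" using a by (elim conjE)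
    ultimately show "hf_mul F (hf_mul F x y) w = hf_mul F x (hf_mul F y w)" by blast
  qed
  show "\<And>x y. x\<in>hf_carrier F \<Longrightarrow> y\<in>hf_carrier F \<Longrightarrow> x \<noteq> hf_zero F \<Longrightarrow> y \<noteq> hf_zero F \<Longrightarrow> hf_mul F x y \<noteq> hf_zero F" using a by auto
  show "\<And>x. x\<in>hf_carrier F \<Longrightarrow> hf_mul F (hf_one F) x = x" using a by auto
  show "\<And>x. x\<in>hf_carrier F \<Longrightarrow> x \<noteq> hf_zero F \<Longrightarrow> \<exists>y\<in>hf_carrier F - {hf_zero F}. hf_mul F x y = hf_one F" using a by auto
  show "\<And>x. x\<in>hf_carrier F \<Longrightarrow> hf_mul F (hf_zero F) x = hf_zero F" using a by auto
qed

lemma homD: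
  assumes "hf_hom F F' h"
  shows "\<And>x. x \<in> hf_carrier F \<Longrightarrow> h x \<in> hf_carrier F'" "h (hf_zero F) = hf_zero F'" "h (hf_one F) = hf_one F'"
   "\<And>x y. x\<in>hf_carrier F \<Longrightarrow> y\<in>hf_carrier F \<Longrightarrow> h (hf_mul F x y) = hf_mul F' (h x) (h y)"
   "\<And>x y z. x\<in>hf_carrier F \<Longrightarrow> y\<in>hf_carrier F \<Longrightarrow> z \<in> hf_add F x y \<Longrightarrow> h z \<in> hf_add F' (h x) (h y)"
  using assms unfolding hf_hom_def by blast+

lemma hom_nonzero:
  assumes "hyperfield F" "hyperfield F'" "hf_hom F F' h" "x \<in> hf_carrier F" "x \<noteq> hf_zero F"
  shows "h x \<noteq> hf_zero F'"
proof
  assume h0: "h x = hf_zero F'"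
  obtain y where y: "y \<in> hf_carrier F" "hf_mul F x y = hf_one F" using hfD(11)[OF assms(1,4,5)] by auto
  have "hf_one F' = h (hf_mul F x y)" using homD(3)[OF assms(3)] y by simp
  also have "\<dots> = hf_mul F' (h x) (h y)" using homD(4)[OF assms(3) assms(4) y(1)] .
  also have "\<dots> = hf_zero F'" using h0 hfD(12)[OF assms(2) homD(1)[OF assms(3) y(1)]] by simp
  finally show False using hfD(3)[OF assms(2)] by simp
qed

lemma neg_props:
  assumes "hyperfield F" "x \<in> hf_carrier F"
  shows "hf_neg F x \<in> hf_carrier F" "hf_zero F \<in> hf_add F x (hf_neg F x)"
proof -
  have "\<exists>!y. y \<in> hf_carrier F \<and> hf_zero F \<in> hf_add F x y" using hfD(6)[OF assms] .
  then have "hf_neg F x \<in> hf_carrier F \<and> hf_zero F \<in> hf_add F x (hf_neg F x)"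
    unfolding hf_neg_def by (rule theI')
  then show "hf_neg F x \<in> hf_carrier F" "hf_zero F \<in> hf_add F x (hf_neg F x)" by auto
qed

lemma hom_neg_one:
  assumes "hyperfield F" "hyperfield F'" "hf_hom F F' h"
  shows "h (hf_neg F (hf_one F)) = hf_neg F' (hf_one F')"
proof -
  have o: "hf_one F \<in> hf_carrier F" using hfD(2)[OF assms(1)] .
  note n = neg_props[OF assms(1) o]
  have c: "h (hf_neg F (hf_one F)) \<in> hf_carrier F'" using homD(1)[OF assms(3) n(1)] .
  have "h (hf_zero F) \<in> hf_add F' (h (hf_one F)) (h (hf_neg F (hf_one F)))"
    using homD(5)[OF assms(3) o n(1) n(2)] .
  then have z: "hf_zero F' \<in> hf_add F' (hf_one F') (h (hf_neg F (hf_one F)))"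
    using homD(2,3)[OF assms(3)] by simp
  have o': "hf_one F' \<in> hf_carrier F'" using hfD(2)[OF assms(2)] .
  note n' = neg_props[OF assms(2) o']
  from hfD(6)[OF assms(2) o'] have "\<And>a b. a \<in> hf_carrier F' \<Longrightarrow> hf_zero F' \<in> hf_add F' (hf_one F') a \<Longrightarrow>
      b \<in> hf_carrier F' \<Longrightarrow> hf_zero F' \<in> hf_add F' (hf_one F') b \<Longrightarrow> a = b" by blast
  from this[OF c z n'] show ?thesis .
qed

lemma sign_carrier: "hyperfield F \<Longrightarrow> hf_sign F s \<in> hf_carrier F"
  "hyperfield F \<Longrightarrow> hf_signpow F k \<in> hf_carrier F"
  unfolding hf_sign_def hf_signpow_def using hfD(2)[of F] neg_props(1)[of F "hf_one F"] by auto

lemma hom_sign: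
  assumes "hyperfield F" "hyperfield F'" "hf_hom F F' h"
  shows "h (hf_sign F s) = hf_sign F' s" "h (hf_signpow F k) = hf_signpow F' k"
  unfolding hf_sign_def hf_signpow_def using hom_neg_one[OF assms] homD(3)[OF assms(3)]
  by auto

lemma hf_sum_carrier:
  assumes "hyperfield F" "set xs \<subseteq> hf_carrier F"
  shows "hf_sum F xs \<subseteq> hf_carrier F"
  using assms(2)
proof (induction xs)
  case Nil then show ?case using hfD(1)[OF assms(1)] by simp
next
  case (Cons x xs)
  then show ?case using hfD(5)[OF assms(1)] by (auto simp: hf_addset_def)
qed

lemma hom_sum:
  assumes "hyperfield F" "hyperfield F'" "hf_hom F F' h" "set xs \<subseteq> hf_carrier F"
  shows "h ` hf_sum F xs \<subseteq> hf_sum F' (map h xs)"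
  using assms(4)
proof (induction xs)
  case Nil then show ?case using homD(2)[OF assms(3)] by simp
next
  case (Cons x xs)
  have sc: "hf_sum F xs \<subseteq> hf_carrier F" using hf_sum_carrier[OF assms(1)] Cons.prems by auto
  have x: "x \<in> hf_carrier F" using Cons.prems by simp
  show ?case
  proof
    fix z assume "z \<in> h ` hf_sum F (x # xs)"
    then obtain y w where y: "y \<in> hf_sum F xs" "w \<in> hf_add F x y" "z = h w"
      by (auto simp: hf_addset_def)
    have "z \<in> hf_add F' (h x) (h y)" using homD(5)[OF assms(3) x _ y(2)] y sc by auto
    moreover have "h y \<in> hf_sum F' (map h xs)" using Cons y by auto
    ultimately show "z \<in> hf_sum F' (map h (x # xs))" by (auto simp: hf_addset_def)
  qed
qed

lemma hf_funsD: "\<phi> \<in> hf_funs F r n \<Longrightarrow> xs \<in> tuples r n \<Longrightarrow> \<phi> xs \<in> hf_carrier F"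
  unfolding hf_funs_def by auto

lemma gp_comp_in: "xs \<in> tuples r n \<Longrightarrow> gp_comp r n h \<phi> xs = h (\<phi> xs)"
  unfolding gp_comp_def by simp

lemma gp_comp_funs: "hf_hom F F' h \<Longrightarrow> \<phi> \<in> hf_funs F r n \<Longrightarrow> gp_comp r n h \<phi> \<in> hf_funs F' r n"
  unfolding hf_funs_def gp_comp_def using homD(1)[of F F' h] by (auto simp: PiE_iff)

lemma gp_rel_hom:
  assumes "hyperfield F" "hyperfield F'" "hf_hom F F' h" "\<phi> \<in> hf_funs F r n"
    "length is = r + 1" "set is \<subseteq> {1..n}" "length js + 1 = r" "set js \<subseteq> {1..n}"
    "gp_relation F \<phi> is js"
  shows "gp_relation F' (gp_comp r n h \<phi>) is js"
proof -
  define t where "t = (\<lambda>k. hf_mul F (hf_signpow F (k + 1))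
                   (hf_mul F (\<phi> (take k is @ drop (Suc k) is)) (\<phi> ((is ! k) # js))))"
  define t' where "t' = (\<lambda>k. hf_mul F' (hf_signpow F' (k + 1))
                   (hf_mul F' (gp_comp r n h \<phi> (take k is @ drop (Suc k) is)) (gp_comp r n h \<phi> ((is ! k) # js))))"
  have A: "take k is @ drop (Suc k) is \<in> tuples r n" if "k < length is" for k
    using that assms(5,6) set_take_subset[of k "is"] set_drop_subset[of "Suc k" "is"]
    unfolding tuples_def by auto
  have B: "(is ! k) # js \<in> tuples r n" if "k < length is" for k
  proof -
    have "is ! k \<in> set is" using that by simp
    then show ?thesis using assms(5-8) unfolding tuples_def by auto
  qed
  have tc: "t k \<in> hf_carrier F" if "k < length is" for k
    unfolding t_def using hfD(4)[OF assms(1)] sign_carrier(2)[OF assms(1)]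
      hf_funsD[OF assms(4) A[OF that]] hf_funsD[OF assms(4) B[OF that]] by simp
  have ht: "h (t k) = t' k" if "k < length is" for k
  proof -
    have "h (t k) = hf_mul F' (h (hf_signpow F (k + 1)))
          (hf_mul F' (h (\<phi> (take k is @ drop (Suc k) is))) (h (\<phi> ((is ! k) # js))))"
      unfolding t_def using homD(4)[OF assms(3)] hfD(4)[OF assms(1)] sign_carrier(2)[OF assms(1)]
      hf_funsD[OF assms(4) A[OF that]] hf_funsD[OF assms(4) B[OF that]] by simp
    then show ?thesis unfolding t'_def using hom_sign(2)[OF assms(1-3)] gp_comp_in[OF A[OF that], of h \<phi>]
      gp_comp_in[OF B[OF that], of h \<phi>] by simp
  qed
  have z: "hf_zero F \<in> hf_sum F (map t [0..<length is])" using assms(9) unfolding gp_relation_def t_def .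
  have sc: "set (map t [0..<length is]) \<subseteq> hf_carrier F" using tc by auto
  have "h (hf_zero F) \<in> hf_sum F' (map h (map t [0..<length is]))"
    using hom_sum[OF assms(1-3) sc] z by blast
  moreover have "map h (map t [0..<length is]) = map t' [0..<length is]"
    unfolding map_map by (rule map_cong) (auto simp: ht)
  ultimately have "hf_zero F' \<in> hf_sum F' (map t' [0..<length is])" using homD(2)[OF assms(3)] by metis
  then show ?thesis unfolding gp_relation_def t'_def .
qed

lemma tuples_perm: "xs \<in> tuples r n \<Longrightarrow> \<sigma> permutes {..<r} \<Longrightarrow> permute_list \<sigma> xs \<in> tuples r n"
  unfolding tuples_def by (auto simp: set_permute_list)

lemma GP_hom:
  assumes "hyperfield F" "hyperfield F'" "hf_hom F F' h" "GP k F r n \<phi>"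
  shows "GP k F' r n (gp_comp r n h \<phi>)"
proof -
  let ?p = "gp_comp r n h \<phi>"
  have common: "?p \<in> hf_funs F' r n \<and> (\<exists>xs\<in>tuples r n. ?p xs \<noteq> hf_zero F') \<and> alternating F' r n ?p
     \<and> {set xs | xs. xs \<in> tuples r n \<and> ?p xs \<noteq> hf_zero F'} = {set xs | xs. xs \<in> tuples r n \<and> \<phi> xs \<noteq> hf_zero F}"
    if f: "\<phi> \<in> hf_funs F r n" and nz: "\<exists>xs\<in>tuples r n. \<phi> xs \<noteq> hf_zero F" and al: "alternating F r n \<phi>"
  proof (intro conjI)
    show "?p \<in> hf_funs F' r n" using gp_comp_funs[OF assms(3) f] .
    have eqz: "?p xs = hf_zero F' \<longleftrightarrow> \<phi> xs = hf_zero F" if "xs \<in> tuples r n" for xs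
      using hom_nonzero[OF assms(1-3) hf_funsD[OF f that]] homD(2)[OF assms(3)] gp_comp_in[OF that, of h \<phi>]
      by auto
    show "\<exists>xs\<in>tuples r n. ?p xs \<noteq> hf_zero F'" using nz eqz by blast
    show "{set xs | xs. xs \<in> tuples r n \<and> ?p xs \<noteq> hf_zero F'} = {set xs | xs. xs \<in> tuples r n \<and> \<phi> xs \<noteq> hf_zero F}"
      using eqz by blast
    show "alternating F' r n ?p"
      unfolding alternating_def
    proof (intro conjI ballI allI impI)
      fix xs assume "xs \<in> tuples r n" "\<not> distinct xs"
      then show "?p xs = hf_zero F'" using al eqz unfolding alternating_def by blast
    next
      fix xs \<sigma> assume xs: "xs \<in> tuples r n" and s: "\<sigma> permutes {..<r}"
      have "?p (permute_list \<sigma> xs) = h (\<phi> (permute_list \<sigma> xs))" using gp_comp_in[OF tuples_perm[OF xs s]] .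
      also have "\<dots> = h (hf_mul F (hf_sign F \<sigma>) (\<phi> xs))" using al xs s unfolding alternating_def by simp
      also have "\<dots> = hf_mul F' (hf_sign F' \<sigma>) (?p xs)"
        using homD(4)[OF assms(3) sign_carrier(1)[OF assms(1)] hf_funsD[OF f xs]] hom_sign(1)[OF assms(1-3)]
          gp_comp_in[OF xs, of h \<phi>] by simp
      finally show "?p (permute_list \<sigma> xs) = hf_mul F' (hf_sign F' \<sigma>) (?p xs)" .
    qed
  qed
  show ?thesis
  proof (cases k)
    case Strong
    then have s: "strong_GP F r n \<phi>" using assms(4) unfolding GP_def by simp
    then have f: "\<phi> \<in> hf_funs F r n" and nz: "\<exists>xs\<in>tuples r n. \<phi> xs \<noteq> hf_zero F"
      and al: "alternating F r n \<phi>"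
      and rel: "\<And>is js. length is = r + 1 \<Longrightarrow> set is \<subseteq> {1..n} \<Longrightarrow> length js + 1 = r \<Longrightarrow> set js \<subseteq> {1..n}
        \<Longrightarrow> gp_relation F \<phi> is js"
      unfolding strong_GP_def by blast+
    note c = common[OF f nz al]
    have "strong_GP F' r n ?p"
      unfolding strong_GP_def
    proof (intro conjI allI impI)
      show "?p \<in> hf_funs F' r n" "\<exists>xs\<in>tuples r n. ?p xs \<noteq> hf_zero F'" "alternating F' r n ?p"
        using c by blast+
      fix "is" js assume "length is = r + 1 \<and> set is \<subseteq> {1..n} \<and> length js + 1 = r \<and> set js \<subseteq> {1..n}"
      then show "gp_relation F' ?p is js" using gp_rel_hom[OF assms(1-3) f _ _ _ _ rel] by blast
    qed
    then show ?thesis unfolding GP_def Strong by simp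
  next
    case Weak
    then have s: "weak_GP F r n \<phi>" using assms(4) unfolding GP_def by simp
    then have f: "\<phi> \<in> hf_funs F r n" and nz: "\<exists>xs\<in>tuples r n. \<phi> xs \<noteq> hf_zero F"
      and al: "alternating F r n \<phi>"
      and mb: "matroid_bases {1..n} {set xs | xs. xs \<in> tuples r n \<and> \<phi> xs \<noteq> hf_zero F}"
      and rel: "\<And>is js. length is = r + 1 \<Longrightarrow> set is \<subseteq> {1..n} \<Longrightarrow> length js + 1 = r \<Longrightarrow> set js \<subseteq> {1..n}
        \<Longrightarrow> card (set is - set js) = 3 \<Longrightarrow> gp_relation F \<phi> is js"
      unfolding weak_GP_def by blast+
    note c = common[OF f nz al]
    have "weak_GP F' r n ?p"
      unfolding weak_GP_def
    proof (intro conjI allI impI)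
      show "?p \<in> hf_funs F' r n" "\<exists>xs\<in>tuples r n. ?p xs \<noteq> hf_zero F'" "alternating F' r n ?p"
        using c by blast+
      show "matroid_bases {1..n} {set xs | xs. xs \<in> tuples r n \<and> ?p xs \<noteq> hf_zero F'}"
        using mb c by simp
      fix "is" js assume a: "length is = r + 1 \<and> set is \<subseteq> {1..n} \<and> length js + 1 = r \<and> set js \<subseteq> {1..n}
        \<and> card (set is - set js) = 3"
      then show "gp_relation F' ?p is js" using gp_rel_hom[OF assms(1-3) f _ _ _ _ rel] by blast
    qed
    then show ?thesis unfolding GP_def Weak by simp
  qed
qed


section \<open>Classes\<close>

lemma unit_inv:
  assumes "hyperfield F" "c \<in> hf_carrier F" "c \<noteq> hf_zero F"
  obtains d where "d \<in> hf_carrier F" "d \<noteq> hf_zero F" "hf_mul F c d = hf_one F" "hf_mul F d c = hf_one F"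
  using hfD(11)[OF assms] hfD(7)[OF assms(1) assms(2)] by force

lemma class_scale:
  assumes F: "hyperfield F" and chi: "\<forall>xs\<in>tuples r n. \<omega> xs \<in> hf_carrier F"
    and c: "c \<in> hf_carrier F" "c \<noteq> hf_zero F"
  shows "gp_class F r n (restrict (\<lambda>xs. hf_mul F c (\<omega> xs)) (tuples r n)) = gp_class F r n \<omega>"
proof
  show "gp_class F r n (restrict (\<lambda>xs. hf_mul F c (\<omega> xs)) (tuples r n)) \<subseteq> gp_class F r n \<omega>"
  proof
    fix z assume "z \<in> gp_class F r n (restrict (\<lambda>xs. hf_mul F c (\<omega> xs)) (tuples r n))"
    then obtain \<alpha> where a: "\<alpha> \<in> hf_carrier F" "\<alpha> \<noteq> hf_zero F"
      and z: "z = restrict (\<lambda>xs. hf_mul F \<alpha> (restrict (\<lambda>xs. hf_mul F c (\<omega> xs)) (tuples r n) xs)) (tuples r n)"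
      unfolding gp_class_def by blast
    have "z = restrict (\<lambda>xs. hf_mul F (hf_mul F \<alpha> c) (\<omega> xs)) (tuples r n)"
      unfolding z using hfD(8)[OF F a(1) c(1)] chi by (auto intro!: restrict_ext)
    moreover have "hf_mul F \<alpha> c \<in> hf_carrier F" "hf_mul F \<alpha> c \<noteq> hf_zero F"
      using hfD(4,9)[OF F] a c by auto
    ultimately show "z \<in> gp_class F r n \<omega>" unfolding gp_class_def by blast
  qed
next
  show "gp_class F r n \<omega> \<subseteq> gp_class F r n (restrict (\<lambda>xs. hf_mul F c (\<omega> xs)) (tuples r n))"
  proof
    fix z assume "z \<in> gp_class F r n \<omega>"
    then obtain \<gamma> where g: "\<gamma> \<in> hf_carrier F" "\<gamma> \<noteq> hf_zero F"
      and z: "z = restrict (\<lambda>xs. hf_mul F \<gamma> (\<omega> xs)) (tuples r n)"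
      unfolding gp_class_def by blast
    obtain d where d: "d \<in> hf_carrier F" "d \<noteq> hf_zero F" "hf_mul F d c = hf_one F"
      using unit_inv[OF F c] by blast
    have e: "hf_mul F (hf_mul F \<gamma> d) (hf_mul F c (\<omega> xs)) = hf_mul F \<gamma> (\<omega> xs)" if "xs \<in> tuples r n" for xs
    proof -
      have x: "\<omega> xs \<in> hf_carrier F" using chi that by blast
      have "hf_mul F (hf_mul F \<gamma> d) (hf_mul F c (\<omega> xs)) = hf_mul F \<gamma> (hf_mul F d (hf_mul F c (\<omega> xs)))"
        using hfD(8)[OF F g(1) d(1)] hfD(4)[OF F] c x by simp
      also have "\<dots> = hf_mul F \<gamma> (hf_mul F (hf_mul F d c) (\<omega> xs))"
        using hfD(8)[OF F d(1) c(1) x] by simp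
      also have "\<dots> = hf_mul F \<gamma> (\<omega> xs)" using d(3) hfD(10)[OF F x] by simp
      finally show ?thesis .
    qed
    have "z = restrict (\<lambda>xs. hf_mul F (hf_mul F \<gamma> d) (restrict (\<lambda>xs. hf_mul F c (\<omega> xs)) (tuples r n) xs)) (tuples r n)"
      unfolding z using e by (auto intro!: restrict_ext)
    moreover have "hf_mul F \<gamma> d \<in> hf_carrier F" "hf_mul F \<gamma> d \<noteq> hf_zero F"
      using hfD(4,9)[OF F] g d by auto
    ultimately show "z \<in> gp_class F r n (restrict (\<lambda>xs. hf_mul F c (\<omega> xs)) (tuples r n))"
      unfolding gp_class_def by blast
  qed
qed

lemma class_self:
  assumes "hyperfield F" "\<omega> \<in> hf_funs F r n"
  shows "\<omega> \<in> gp_class F r n \<omega>"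
proof -
  have "\<omega> = restrict (\<lambda>xs. hf_mul F (hf_one F) (\<omega> xs)) (tuples r n)"
    using assms hfD(10)[OF assms(1)] unfolding hf_funs_def
    by (auto simp: PiE_iff extensional_def fun_eq_iff)
  then show ?thesis unfolding gp_class_def using hfD(2,3)[OF assms(1)] by blast
qed

lemma class_mem:
  "z \<in> gp_class F r n \<omega> \<Longrightarrow> \<exists>\<alpha>. \<alpha> \<in> hf_carrier F \<and> \<alpha> \<noteq> hf_zero F \<and> z = restrict (\<lambda>xs. hf_mul F \<alpha> (\<omega> xs)) (tuples r n)"
  unfolding gp_class_def by blast

lemma class_wd:
  assumes F: "hyperfield F" and F': "hyperfield F'" and h: "hf_hom F F' h"
    and p: "\<phi> \<in> hf_funs F r n" and s: "\<psi> \<in> hf_funs F r n" and e: "gp_class F r n \<phi> = gp_class F r n \<psi>"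
  shows "gp_class F' r n (gp_comp r n h \<psi>) = gp_class F' r n (gp_comp r n h \<phi>)"
proof -
  have "\<psi> \<in> gp_class F r n \<phi>" using class_self[OF F s] e by simp
  then obtain \<alpha> where a: "\<alpha> \<in> hf_carrier F" "\<alpha> \<noteq> hf_zero F" and ps: "\<psi> = restrict (\<lambda>xs. hf_mul F \<alpha> (\<phi> xs)) (tuples r n)"
    using class_mem by blast
  have eq: "gp_comp r n h \<psi> = restrict (\<lambda>xs. hf_mul F' (h \<alpha>) (gp_comp r n h \<phi> xs)) (tuples r n)"
    unfolding ps gp_comp_def using homD(4)[OF h a(1)] hf_funsD[OF p] by (auto intro!: restrict_ext)
  have "gp_class F' r n (restrict (\<lambda>xs. hf_mul F' (h \<alpha>) (gp_comp r n h \<phi> xs)) (tuples r n)) = gp_class F' r n (gp_comp r n h \<phi>)"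
    by (rule class_scale[OF F']) (use gp_comp_in[of _ r n h \<phi>] hf_funsD[OF p] homD(1)[OF h] hom_nonzero[OF F F' h a] homD(1)[OF h a(1)] in auto)
  then show ?thesis using eq by simp
qed


section \<open>Topology\<close>

lemma openin_quotient_topology:
  "openin (quotient_topology X q) U \<longleftrightarrow> U \<subseteq> q ` topspace X \<and> openin X {x \<in> topspace X. q x \<in> U}"
proof -
  have "istopology (\<lambda>U. U \<subseteq> q ` topspace X \<and> openin X {x \<in> topspace X. q x \<in> U})"
    unfolding istopology_def
  proof (rule conjI; intro allI impI)
    fix S T assume "S \<subseteq> q ` topspace X \<and> openin X {x \<in> topspace X. q x \<in> S}"
      "T \<subseteq> q ` topspace X \<and> openin X {x \<in> topspace X. q x \<in> T}"
    moreover have "{x \<in> topspace X. q x \<in> S \<inter> T} = {x \<in> topspace X. q x \<in> S} \<inter> {x \<in> topspace X. q x \<in> T}" by auto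
    ultimately show "S \<inter> T \<subseteq> q ` topspace X \<and> openin X {x \<in> topspace X. q x \<in> S \<inter> T}" by auto
  next
    fix K assume K: "\<forall>S\<in>K. S \<subseteq> q ` topspace X \<and> openin X {x \<in> topspace X. q x \<in> S}"
    have "{x \<in> topspace X. q x \<in> \<Union>K} = \<Union>((\<lambda>S. {x \<in> topspace X. q x \<in> S}) ` K)" by auto
    then show "\<Union>K \<subseteq> q ` topspace X \<and> openin X {x \<in> topspace X. q x \<in> \<Union>K}"
      using K by auto
  qed
  then show ?thesis unfolding quotient_topology_def by simp
qed

lemma topspace_quotient_topology: "topspace (quotient_topology X q) = q ` topspace X"
proof -
  have "{x \<in> topspace X. q x \<in> q ` topspace X} = topspace X" by auto
  then have "openin (quotient_topology X q) (q ` topspace X)"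
    unfolding openin_quotient_topology by auto
  then have "q ` topspace X \<subseteq> topspace (quotient_topology X q)" by (rule openin_subset)
  moreover have "topspace (quotient_topology X q) \<subseteq> q ` topspace X"
    using openin_quotient_topology[of X q "topspace (quotient_topology X q)"] by simp
  ultimately show ?thesis by blast
qed

lemma continuous_quotient: "continuous_map X (quotient_topology X q) q"
  unfolding continuous_map openin_quotient_topology topspace_quotient_topology by auto

lemma openin_zero_coarse:
  "openin (zero_coarse F T) U \<longleftrightarrow> U = topspace T \<or> (openin T U \<and> hf_zero F \<notin> U)"
proof -
  have "istopology (\<lambda>U. U = topspace T \<or> (openin T U \<and> hf_zero F \<notin> U))"
    unfolding istopology_def
  proof (rule conjI; intro allI impI)
    fix S U assume S: "S = topspace T \<or> openin T S \<and> hf_zero F \<notin> S" and U: "U = topspace T \<or> openin T U \<and> hf_zero F \<notin> U"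
    show "S \<inter> U = topspace T \<or> openin T (S \<inter> U) \<and> hf_zero F \<notin> S \<inter> U"
      using S U openin_subset[of T S] openin_subset[of T U] by (auto simp: Int_absorb1 Int_absorb2)
  next
    fix K assume K: "\<forall>S\<in>K. S = topspace T \<or> openin T S \<and> hf_zero F \<notin> S"
    show "\<Union>K = topspace T \<or> openin T (\<Union>K) \<and> hf_zero F \<notin> \<Union>K"
    proof (cases "topspace T \<in> K")
      case True
      have "\<Union>K \<subseteq> topspace T" using K openin_subset by blast
      then show ?thesis using True by blast
    next
      case False
      then show ?thesis using K by auto
    qed
  qed
  then show ?thesis unfolding zero_coarse_def by simp
qed

lemma topspace_zero_coarse: "topspace (zero_coarse F T) = topspace T"
proof -
  have "openin (zero_coarse F T) (topspace T)" unfolding openin_zero_coarse by simp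
  then have "topspace T \<subseteq> topspace (zero_coarse F T)" by (rule openin_subset)
  moreover have "topspace (zero_coarse F T) \<subseteq> topspace T"
  proof -
    have "topspace (zero_coarse F T) = topspace T \<or> openin T (topspace (zero_coarse F T))"
      using openin_zero_coarse[of F T "topspace (zero_coarse F T)"] openin_topspace by blast
    then show ?thesis using openin_subset by blast
  qed
  ultimately show ?thesis by blast
qed

lemma continuous_to_zero_coarse:
  assumes "continuous_map X T g" shows "continuous_map X (zero_coarse F T) g"
  unfolding continuous_map topspace_zero_coarse
proof (intro conjI allI impI)
  show "g ` topspace X \<subseteq> topspace T" using assms by (simp add: continuous_map)
  fix U assume "openin (zero_coarse F T) U"
  then have "U = topspace T \<or> openin T U" unfolding openin_zero_coarse by blast
  then show "openin X {x \<in> topspace X. g x \<in> U}"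
  proof
    assume "U = topspace T"
    then have "{x \<in> topspace X. g x \<in> U} = topspace X" using assms by (auto simp: continuous_map)
    then show ?thesis by simp
  next
    assume "openin T U" then show ?thesis using assms by (simp add: continuous_map)
  qed
qed

lemma subtopology_zero_coarse:
  assumes "openin T S" "hf_zero F \<notin> S"
  shows "subtopology (zero_coarse F T) S = subtopology T S"
  unfolding topology_eq openin_subtopology openin_zero_coarse
proof (intro allI iffI)
  fix U assume "\<exists>V. (V = topspace T \<or> openin T V \<and> hf_zero F \<notin> V) \<and> U = V \<inter> S"
  then obtain V where V: "V = topspace T \<or> openin T V" "U = V \<inter> S" by blast
  show "\<exists>V. openin T V \<and> U = V \<inter> S" using V by auto
next
  fix U assume "\<exists>V. openin T V \<and> U = V \<inter> S"
  then obtain V where V: "openin T V" "U = V \<inter> S" by blast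
  then have "openin T (V \<inter> S)" "hf_zero F \<notin> V \<inter> S" using assms by auto
  moreover have "U = (V \<inter> S) \<inter> S" using V by auto
  ultimately show "\<exists>V. (V = topspace T \<or> openin T V \<and> hf_zero F \<notin> V) \<and> U = V \<inter> S" by blast
qed

lemma topspace_prodT: "topological_hyperfield F T \<Longrightarrow> topspace (product_topology (\<lambda>_. T) (tuples r n)) = hf_funs F r n"
  unfolding topological_hyperfield_def hf_funs_def by simp

lemma scale_continuous:
  assumes "topological_hyperfield F T" "c \<in> hf_carrier F"
  shows "continuous_map (product_topology (\<lambda>_. T) I) (product_topology (\<lambda>_. T) I)
           (\<lambda>y. restrict (\<lambda>xs. hf_mul F c (y xs)) I)"
  unfolding continuous_map_componentwise
proof (intro conjI ballI)
  show "(\<lambda>y. restrict (\<lambda>xs. hf_mul F c (y xs)) I) ` topspace (product_topology (\<lambda>_. T) I) \<subseteq> extensional I"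
    by auto
  fix e assume e: "e \<in> I"
  have m: "continuous_map (prod_topology T T) T (\<lambda>(x, y). hf_mul F x y)"
    using assms(1) unfolding topological_hyperfield_def by (elim conjE)
  have ct: "c \<in> topspace T" using assms unfolding topological_hyperfield_def by simp
  have "continuous_map (product_topology (\<lambda>_. T) I) (prod_topology T T) (\<lambda>y. (c, y e))"
    using ct e by (intro continuous_map_pairedI continuous_map_product_projection) auto
  then have "continuous_map (product_topology (\<lambda>_. T) I) T ((\<lambda>(x, y). hf_mul F x y) \<circ> (\<lambda>y. (c, y e)))"
    using m by (rule continuous_map_compose)
  then show "continuous_map (product_topology (\<lambda>_. T) I) T (\<lambda>y. restrict (\<lambda>xs. hf_mul F c (y xs)) I e)"
    using e by (simp add: o_def)
qed


lemma nonzero_fun: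
  assumes "y \<in> hf_funs F r n" "y \<noteq> restrict (\<lambda>_. hf_zero F) (tuples r n)"
  shows "\<exists>xs\<in>tuples r n. y xs \<noteq> hf_zero F"
proof (rule ccontr)
  assume "\<not> ?thesis"
  then have "y = restrict (\<lambda>_. hf_zero F) (tuples r n)"
    using assms(1) unfolding hf_funs_def by (auto simp: PiE_iff extensional_def fun_eq_iff)
  then show False using assms(2) by simp
qed

lemma scale_in_funs:
  assumes F: "hyperfield F" and y: "y \<in> hf_funs F r n" "y \<noteq> restrict (\<lambda>_. hf_zero F) (tuples r n)"
    and c: "c \<in> hf_carrier F" "c \<noteq> hf_zero F"
  shows "restrict (\<lambda>xs. hf_mul F c (y xs)) (tuples r n) \<in> hf_funs F r n - {restrict (\<lambda>_. hf_zero F) (tuples r n)}"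
proof -
  obtain xs where xs: "xs \<in> tuples r n" "y xs \<noteq> hf_zero F" using nonzero_fun[OF y] by blast
  have "hf_mul F c (y xs) \<noteq> hf_zero F" using hfD(9)[OF F c(1) hf_funsD[OF y(1) xs(1)] c(2) xs(2)] .
  then have "restrict (\<lambda>xs. hf_mul F c (y xs)) (tuples r n) \<noteq> restrict (\<lambda>_. hf_zero F) (tuples r n)"
  proof (intro notI)
    assume "restrict (\<lambda>xs. hf_mul F c (y xs)) (tuples r n) = restrict (\<lambda>_. hf_zero F) (tuples r n)"
    then have "restrict (\<lambda>xs. hf_mul F c (y xs)) (tuples r n) xs = restrict (\<lambda>_. hf_zero F) (tuples r n) xs" by simp
    then show False using xs(1) \<open>hf_mul F c (y xs) \<noteq> hf_zero F\<close> by simp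
  qed
  moreover have "restrict (\<lambda>xs. hf_mul F c (y xs)) (tuples r n) \<in> hf_funs F r n"
    unfolding hf_funs_def restrict_PiE_iff
  proof
    fix zs assume "zs \<in> tuples r n"
    then show "hf_mul F c (y zs) \<in> hf_carrier F" using hfD(4)[OF F c(1) hf_funsD[OF y(1)]] by simp
  qed
  ultimately show ?thesis by blast
qed

lemma sat_open:
  fixes r n :: nat
  assumes TF: "topological_hyperfield F T"
    and U0: "openin (product_topology (\<lambda>_. T) (tuples r n)) U0"
  defines "X \<equiv> subtopology (product_topology (\<lambda>_. T) (tuples r n)) (hf_funs F r n - {restrict (\<lambda>_. hf_zero F) (tuples r n)})"
  shows "openin (quotient_topology X (gp_class F r n)) (gp_class F r n ` (U0 \<inter> topspace X))"
proof -
  let ?q = "gp_class F r n"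
  let ?P = "product_topology (\<lambda>_. T) (tuples r n)"
  have F: "hyperfield F" using TF unfolding topological_hyperfield_def by (rule conjunct1)
  have tX: "topspace X = hf_funs F r n - {restrict (\<lambda>_. hf_zero F) (tuples r n)}"
    unfolding X_def topspace_subtopology
    apply (subst topspace_prodT[OF TF])
    by (rule Int_absorb1, rule Diff_subset)
  have "openin X {x \<in> topspace X. ?q x \<in> ?q ` (U0 \<inter> topspace X)}"
  proof (rule openin_subopen[THEN iffD2], rule ballI)
    fix x assume "x \<in> {x \<in> topspace X. ?q x \<in> ?q ` (U0 \<inter> topspace X)}"
    then obtain u where x: "x \<in> topspace X" and u: "u \<in> U0" "u \<in> topspace X" and qe: "?q x = ?q u" by blast
    have xf: "x \<in> hf_funs F r n" and uf: "u \<in> hf_funs F r n" using x u tX by auto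
    have "x \<in> ?q u" using class_self[OF F xf] qe by simp
    then obtain a where a: "a \<in> hf_carrier F" "a \<noteq> hf_zero F" and xe: "x = restrict (\<lambda>xs. hf_mul F a (u xs)) (tuples r n)"
      using class_mem by blast
    obtain b where b: "b \<in> hf_carrier F" "b \<noteq> hf_zero F" "hf_mul F b a = hf_one F"
      using unit_inv[OF F a] by blast
    define S where "S = (\<lambda>y. restrict (\<lambda>xs. hf_mul F b (y xs)) (tuples r n))"
    define V where "V = {y \<in> topspace X. S y \<in> U0}"
    have cS: "continuous_map X ?P S"
      unfolding X_def S_def by (rule continuous_map_from_subtopology[OF scale_continuous[OF TF b(1)]])
    have "openin X V" unfolding V_def using cS U0 by (simp add: continuous_map)
    moreover have "S x = u"
    proof -
      have "S x = restrict (\<lambda>xs. hf_mul F (hf_mul F b a) (u xs)) (tuples r n)"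
        unfolding S_def xe using hfD(8)[OF F b(1) a(1)] hf_funsD[OF uf] by (auto intro!: restrict_ext)
      also have "\<dots> = restrict u (tuples r n)" using b(3) hfD(10)[OF F] hf_funsD[OF uf] by (auto intro!: restrict_ext)
      also have "\<dots> = u" using uf unfolding hf_funs_def by (simp add: PiE_restrict)
      finally show ?thesis .
    qed
    then have "x \<in> V" unfolding V_def using x u by simp
    moreover have "V \<subseteq> {x \<in> topspace X. ?q x \<in> ?q ` (U0 \<inter> topspace X)}"
    proof
      fix y assume y: "y \<in> V"
      then have yt: "y \<in> topspace X" and yU: "S y \<in> U0" unfolding V_def by auto
      have St: "S y \<in> topspace X" unfolding S_def tX by (rule scale_in_funs[OF F _ _ b(1,2)]) (use yt tX in auto)
      have "?q (S y) = ?q y" unfolding S_def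
        by (rule class_scale[OF F _ b(1,2)]) (use yt tX hf_funsD in auto)
      then have "?q y \<in> ?q ` (U0 \<inter> topspace X)" using yU St by (metis IntI image_eqI)
      then show "y \<in> {x \<in> topspace X. ?q x \<in> ?q ` (U0 \<inter> topspace X)}" using yt by simp
    qed
    ultimately show "\<exists>T. openin X T \<and> x \<in> T \<and> T \<subseteq> {x \<in> topspace X. ?q x \<in> ?q ` (U0 \<inter> topspace X)}" by blast
  qed
  then show ?thesis unfolding openin_quotient_topology by auto
qed

lemma support_eq:
  assumes F: "hyperfield F" and F'': "hyperfield F''" and f: "hf_hom F F'' f"
    and p1: "\<psi>1 \<in> hf_funs F r n" and p2: "\<psi>2 \<in> hf_funs F r n"
    and e: "gp_class F'' r n (gp_comp r n f \<psi>1) = gp_class F'' r n (gp_comp r n f \<psi>2)"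
    and xs: "xs \<in> tuples r n" and z: "\<psi>1 xs = hf_zero F"
  shows "\<psi>2 xs = hf_zero F"
proof (rule ccontr)
  assume nz: "\<psi>2 xs \<noteq> hf_zero F"
  have "gp_comp r n f \<psi>2 \<in> hf_funs F'' r n" using gp_comp_funs[OF f p2] .
  then have "gp_comp r n f \<psi>2 \<in> gp_class F'' r n (gp_comp r n f \<psi>1)" using class_self[OF F''] e by simp
  then obtain b where b: "b \<in> hf_carrier F''" and ee: "gp_comp r n f \<psi>2 = restrict (\<lambda>xs. hf_mul F'' b (gp_comp r n f \<psi>1 xs)) (tuples r n)"
    using class_mem by blast
  have "f (\<psi>2 xs) = hf_mul F'' b (f (\<psi>1 xs))"
    using fun_cong[OF ee, of xs] xs gp_comp_in[OF xs, of f \<psi>1] gp_comp_in[OF xs, of f \<psi>2] by simp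
  also have "\<dots> = hf_zero F''" using z homD(2)[OF f] hfD(7,12)[OF F'' b] hfD(1)[OF F''] by simp
  finally show False using hom_nonzero[OF F F'' f hf_funsD[OF p2 xs] nz] by simp
qed

lemma GP_basic: "GP k F r n \<phi> \<Longrightarrow> \<phi> \<in> hf_funs F r n \<and> (\<exists>xs\<in>tuples r n. \<phi> xs \<noteq> hf_zero F)"
  unfolding GP_def strong_GP_def weak_GP_def by (cases k) auto

lemma GP_topspace:
  assumes "GP k F r n \<phi>"
  shows "\<phi> \<in> hf_funs F r n - {restrict (\<lambda>_. hf_zero F) (tuples r n)}"
proof -
  obtain xs where "xs \<in> tuples r n" "\<phi> xs \<noteq> hf_zero F" using GP_basic[OF assms] by blast
  then have "\<phi> \<noteq> restrict (\<lambda>_. hf_zero F) (tuples r n)"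
  proof (intro notI)
    assume "\<phi> = restrict (\<lambda>_. hf_zero F) (tuples r n)"
    then have "\<phi> xs = restrict (\<lambda>_. hf_zero F) (tuples r n) xs" by simp
    then show False using \<open>xs \<in> tuples r n\<close> \<open>\<phi> xs \<noteq> hf_zero F\<close> by simp
  qed
  then show ?thesis using GP_basic[OF assms] by blast
qed


lemma Real_top_eq:
  "Real_top k F T F'' f r n M = subtopology (proj_space_top F T r n) (Real_set k F F'' f r n M)"
proof -
  have "Gr k F r n \<inter> Real_set k F F'' f r n M = Real_set k F F'' f r n M"
    unfolding Real_set_def by blast
  then show ?thesis unfolding Real_top_def Gr_top_def subtopology_subtopology by simp
qed

lemma Real_set_topspace:
  assumes "topological_hyperfield F T"
  shows "Real_set k F F'' f r n M \<subseteq> topspace (proj_space_top F T r n)"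
proof
  fix C assume "C \<in> Real_set k F F'' f r n M"
  then obtain \<phi> where p: "GP k F r n \<phi>" "C = gp_class F r n \<phi>" unfolding Real_set_def Gr_def by blast
  have "\<phi> \<in> topspace (subtopology (product_topology (\<lambda>_. T) (tuples r n))
          (hf_funs F r n - {restrict (\<lambda>_. hf_zero F) (tuples r n)}))"
    using GP_topspace[OF p(1)] topspace_prodT[OF assms] by simp
  then show "C \<in> topspace (proj_space_top F T r n)"
    unfolding proj_space_top_def topspace_quotient_topology p(2) by blast
qed

lemma topspace_Real_top:
  assumes "topological_hyperfield F T"
  shows "topspace (Real_top k F T F'' f r n M) = Real_set k F F'' f r n M"
  unfolding Real_top_eq topspace_subtopology using Real_set_topspace[OF assms] by blast

theorem theorem5p3:
  fixes F :: "('a, 'm) hyperfield_scheme" and T :: "'a topology"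
    and F' :: "('b, 'n) hyperfield_scheme" and T' :: "'b topology"
    and F'' :: "('c, 'o) hyperfield_scheme"
    and f :: "'a \<Rightarrow> 'c" and f' :: "'b \<Rightarrow> 'c"
    and k :: gp_kind and r n :: nat
    and M :: "(nat list \<Rightarrow> 'c) set"
    and H :: "'a \<Rightarrow> real \<Rightarrow> 'b"
  assumes "topological_hyperfield F T"
    and "topological_hyperfield F' T'"
    and "hyperfield F''"
    and "hf_hom F F'' f"
    and "hf_hom F' F'' f'"
    and "M \<in> Gr k F'' r n"
    and "continuous_map (prod_topology (zero_coarse F T) (top_of_set {0..1}))
                        (zero_coarse F' T') (\<lambda>(x, t). H x t)"
    and "\<And>t. t \<in> {0..1} \<Longrightarrow> hf_hom F F' (\<lambda>x. H x t)"
    and "\<And>x t. x \<in> hf_carrier F \<Longrightarrow> t \<in> {0..1} \<Longrightarrow> f' (H x t) = f x"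
  shows "\<exists>G. continuous_map
               (prod_topology (Real_top k F T F'' f r n M) (top_of_set {0..1}))
               (Real_top k F' T' F'' f' r n M) G
           \<and> (\<forall>\<phi> t. GP k F r n \<phi> \<and> gp_class F r n \<phi> \<in> Real_set k F F'' f r n M \<and> t \<in> {0..1}
                 \<longrightarrow> G (gp_class F r n \<phi>, t) = gp_class F' r n (gp_comp r n (\<lambda>x. H x t) \<phi>))"
proof -
  note TF = assms(1) and TF' = assms(2) and F'' = assms(3) and f = assms(4) and f' = assms(5)
    and Hc = assms(7) and Hh = assms(8) and Hf = assms(9)
  have F: "hyperfield F" using TF unfolding topological_hyperfield_def by (rule conjunct1)
  have F': "hyperfield F'" using TF' unfolding topological_hyperfield_def by (rule conjunct1)
  have tT': "topspace T' = hf_carrier F'" using TF' unfolding topological_hyperfield_def by (elim conjE)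
  have oT': "openin T' (hf_carrier F' - {hf_zero F'})" using TF' unfolding topological_hyperfield_def by (elim conjE)
  define I where "I = top_of_set {0..1::real}"
  have tI: "topspace I = {0..1}" unfolding I_def by simp
  define P where "P = product_topology (\<lambda>_. T) (tuples r n)"
  define X where "X = subtopology P (hf_funs F r n - {restrict (\<lambda>_. hf_zero F) (tuples r n)})"
  define q where "q = gp_class F r n"
  define P' where "P' = product_topology (\<lambda>_. T') (tuples r n)"
  define X' where "X' = subtopology P' (hf_funs F' r n - {restrict (\<lambda>_. hf_zero F') (tuples r n)})"
  define q' where "q' = gp_class F' r n"
  define Rl where "Rl = Real_set k F F'' f r n M"
  define Rl' where "Rl' = Real_set k F' F'' f' r n M"
  have tX: "topspace X = hf_funs F r n - {restrict (\<lambda>_. hf_zero F) (tuples r n)}"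
    unfolding X_def P_def topspace_subtopology
    apply (subst topspace_prodT[OF TF])
    by (rule Int_absorb1, rule Diff_subset)
  have tX': "topspace X' = hf_funs F' r n - {restrict (\<lambda>_. hf_zero F') (tuples r n)}"
    unfolding X'_def P'_def topspace_subtopology
    apply (subst topspace_prodT[OF TF'])
    by (rule Int_absorb1, rule Diff_subset)
  have R: "Real_top k F T F'' f r n M = subtopology (quotient_topology X q) Rl"
    unfolding Real_top_eq Rl_def proj_space_top_def X_def P_def q_def ..
  have R': "Real_top k F' T' F'' f' r n M = subtopology (quotient_topology X' q') Rl'"
    unfolding Real_top_eq Rl'_def proj_space_top_def X'_def P'_def q'_def ..
  have tR: "topspace (Real_top k F T F'' f r n M) = Rl" unfolding Rl_def by (rule topspace_Real_top[OF TF])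
  have tR': "topspace (Real_top k F' T' F'' f' r n M) = Rl'" unfolding Rl'_def by (rule topspace_Real_top[OF TF'])
  have RlGP: "\<exists>\<phi>. GP k F r n \<phi> \<and> C = q \<phi>" if "C \<in> Rl" for C
    using that unfolding Rl_def Real_set_def Gr_def q_def by blast
  have Rlprop: "gp_class F'' r n (gp_comp r n f \<phi>) = M" if "q \<phi> \<in> Rl" "\<phi> \<in> hf_funs F r n" for \<phi>
    using that class_self[OF F that(2)] unfolding Rl_def Real_set_def q_def by blast

  define G where "G = (\<lambda>(C, t). q' (gp_comp r n (\<lambda>x. H x t) (SOME \<psi>. \<psi> \<in> hf_funs F r n \<and> q \<psi> = C)))"
  define \<Phi> where "\<Phi> = (\<lambda>(\<psi>, t). gp_comp r n (\<lambda>x. H x (t::real)) \<psi>)"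
  define A where "A = {\<psi> \<in> topspace X. q \<psi> \<in> Rl}"

  have key: "G (q \<psi>, t) = q' (\<Phi> (\<psi>, t))" if "\<psi> \<in> hf_funs F r n" "t \<in> {0..1}" for \<psi> t
  proof -
    let ?s = "SOME \<psi>'. \<psi>' \<in> hf_funs F r n \<and> q \<psi>' = q \<psi>"
    have "?s \<in> hf_funs F r n \<and> q ?s = q \<psi>" by (rule someI[of _ \<psi>]) (use that in simp)
    then show ?thesis unfolding G_def \<Phi>_def q'_def using class_wd[OF F F' Hh[OF that(2)] that(1), of ?s]
      unfolding q_def by simp
  qed

  have range: "G (C, t) \<in> Rl'" if Cin: "C \<in> Rl" and tin: "t \<in> {0..1}" for C t
  proof -
    obtain \<phi> where p: "GP k F r n \<phi>" "C = q \<phi>" using RlGP[OF Cin] by blast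
    have pf: "\<phi> \<in> hf_funs F r n" using GP_basic[OF p(1)] by blast
    have h: "hf_hom F F' (\<lambda>x. H x t)" using Hh[OF tin] .
    have e: "G (C, t) = q' (gp_comp r n (\<lambda>x. H x t) \<phi>)" using key[OF pf tin] p(2) unfolding \<Phi>_def by simp
    have gp: "GP k F' r n (gp_comp r n (\<lambda>x. H x t) \<phi>)" using GP_hom[OF F F' h p(1)] .
    have M: "gp_class F'' r n (gp_comp r n f \<phi>) = M" using Rlprop[of \<phi>] Cin p(2) pf by simp
    have "\<forall>\<psi>\<in>q' (gp_comp r n (\<lambda>x. H x t) \<phi>). gp_class F'' r n (gp_comp r n f' \<psi>) = M"
    proof
      fix \<psi> assume "\<psi> \<in> q' (gp_comp r n (\<lambda>x. H x t) \<phi>)"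
      then obtain b where b: "b \<in> hf_carrier F'" "b \<noteq> hf_zero F'"
        and pe: "\<psi> = restrict (\<lambda>xs. hf_mul F' b (gp_comp r n (\<lambda>x. H x t) \<phi> xs)) (tuples r n)"
        unfolding q'_def using class_mem by blast
      have eq: "gp_comp r n f' \<psi> = restrict (\<lambda>xs. hf_mul F'' (f' b) (gp_comp r n f \<phi> xs)) (tuples r n)"
      proof (unfold gp_comp_def[of r n f' \<psi>], rule restrict_ext)
        fix xs assume xs: "xs \<in> tuples r n"
        have c: "\<phi> xs \<in> hf_carrier F" using hf_funsD[OF pf xs] .
        have "(f' \<circ> \<psi>) xs = f' (hf_mul F' b (H (\<phi> xs) t))" using xs pe gp_comp_in[OF xs, of "\<lambda>x. H x t" \<phi>] by simp
        also have "\<dots> = hf_mul F'' (f' b) (f' (H (\<phi> xs) t))" using homD(4)[OF f' b(1) homD(1)[OF h c]] .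
        also have "\<dots> = hf_mul F'' (f' b) (gp_comp r n f \<phi> xs)" using Hf[OF c tin] gp_comp_in[OF xs, of f \<phi>] by simp
        finally show "(f' \<circ> \<psi>) xs = hf_mul F'' (f' b) (gp_comp r n f \<phi> xs)" .
      qed
      have "gp_class F'' r n (restrict (\<lambda>xs. hf_mul F'' (f' b) (gp_comp r n f \<phi> xs)) (tuples r n)) = gp_class F'' r n (gp_comp r n f \<phi>)"
        by (rule class_scale[OF F'' _ homD(1)[OF f' b(1)] hom_nonzero[OF F' F'' f' b]])
          (use gp_comp_in[of _ r n f \<phi>] hf_funsD[OF pf] homD(1)[OF f] in auto)
      then have "gp_class F'' r n (gp_comp r n f' \<psi>) = gp_class F'' r n (gp_comp r n f \<phi>)"
        using eq by simp
      then show "gp_class F'' r n (gp_comp r n f' \<psi>) = M" using M by simp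
    qed
    moreover have "q' (gp_comp r n (\<lambda>x. H x t) \<phi>) \<in> Gr k F' r n" unfolding q'_def Gr_def using gp by blast
    ultimately show ?thesis unfolding e Rl'_def Real_set_def by blast
  qed
  have GX: "\<phi> \<in> topspace X" if "GP k F r n \<phi>" for \<phi>
    using GP_topspace[OF that] tX by simp
  have Aprop: "\<psi> \<in> hf_funs F r n" "\<psi> \<noteq> restrict (\<lambda>_. hf_zero F) (tuples r n)" "q \<psi> \<in> Rl" if "\<psi> \<in> A" for \<psi>
    using that tX unfolding A_def by auto
  define D0 where "D0 = prod_topology (subtopology P A) I"
  have tP: "topspace P = hf_funs F r n" unfolding P_def by (rule topspace_prodT[OF TF])
  have tD0: "topspace D0 = A \<times> {0..1}"
  proof -
    have "A \<subseteq> topspace P" using tP Aprop by blast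
    then have "topspace (subtopology P A) = A" by auto
    then show ?thesis unfolding D0_def by (simp add: tI)
  qed
  have comp_cont: "continuous_map D0 T' (\<lambda>z. \<Phi> z e)" if e: "e \<in> tuples r n" for e
  proof (cases "\<forall>\<psi>\<in>A. \<psi> e = hf_zero F")
    case True
    show ?thesis
    proof (rule continuous_map_eq[of D0 T' "\<lambda>z. hf_zero F'"])
      show "continuous_map D0 T' (\<lambda>z. hf_zero F')" using hfD(1)[OF F'] tT' by simp
      fix z assume "z \<in> topspace D0"
      then obtain \<psi> s where z: "z = (\<psi>, s)" "\<psi> \<in> A" "s \<in> {0..1}" using tD0 by auto
      then show "hf_zero F' = \<Phi> z e" unfolding \<Phi>_def
        using gp_comp_in[OF e, of "\<lambda>x. H x s" \<psi>] True homD(2)[OF Hh[OF z(3)]] by simp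
    qed
  next
    case False
    then obtain \<psi>0 where p0: "\<psi>0 \<in> A" "\<psi>0 e \<noteq> hf_zero F" by blast
    have nz: "\<psi> e \<noteq> hf_zero F" if "\<psi> \<in> A" for \<psi>
    proof
      assume z: "\<psi> e = hf_zero F"
      have "gp_class F'' r n (gp_comp r n f \<psi>) = gp_class F'' r n (gp_comp r n f \<psi>0)"
        using Rlprop[OF Aprop(3)[OF that] Aprop(1)[OF that]] Rlprop[OF Aprop(3)[OF p0(1)] Aprop(1)[OF p0(1)]] by simp
      from support_eq[OF F F'' f Aprop(1)[OF that] Aprop(1)[OF p0(1)] this e z] p0(2) show False by simp
    qed
    have c1: "continuous_map D0 (prod_topology (zero_coarse F T) I) (\<lambda>z. (fst z e, snd z))"
    proof (rule continuous_map_pairedI)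
      have "continuous_map (subtopology P A) T (\<lambda>\<psi>. \<psi> e)" unfolding P_def
        by (rule continuous_map_from_subtopology[OF continuous_map_product_projection[OF e]])
      then have "continuous_map D0 T ((\<lambda>\<psi>. \<psi> e) \<circ> fst)" unfolding D0_def
        by (intro continuous_map_compose[OF continuous_map_fst])
      then show "continuous_map D0 (zero_coarse F T) (\<lambda>z. fst z e)"
        by (intro continuous_to_zero_coarse) (simp add: o_def)
      show "continuous_map D0 I snd" unfolding D0_def by (rule continuous_map_snd)
    qed
    have c2: "continuous_map D0 (zero_coarse F' T') ((\<lambda>(x, t). H x t) \<circ> (\<lambda>z. (fst z e, snd z)))"
      using continuous_map_compose[OF c1 Hc[folded I_def]] .
    have img: "((\<lambda>(x, t). H x t) \<circ> (\<lambda>z. (fst z e, snd z))) \<in> topspace D0 \<rightarrow> hf_carrier F' - {hf_zero F'}"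
    proof
      fix z assume "z \<in> topspace D0"
      then obtain \<psi> s where z: "z = (\<psi>, s)" "\<psi> \<in> A" "s \<in> {0..1}" using tD0 by auto
      have c: "\<psi> e \<in> hf_carrier F" using hf_funsD[OF Aprop(1)[OF z(2)] e] .
      show "((\<lambda>(x, t). H x t) \<circ> (\<lambda>z. (fst z e, snd z))) z \<in> hf_carrier F' - {hf_zero F'}"
        using z(1) hom_nonzero[OF F F' Hh[OF z(3)] c nz[OF z(2)]] homD(1)[OF Hh[OF z(3)] c] by simp
    qed
    have "continuous_map D0 (subtopology (zero_coarse F' T') (hf_carrier F' - {hf_zero F'}))
            ((\<lambda>(x, t). H x t) \<circ> (\<lambda>z. (fst z e, snd z)))"
      using c2 img by (simp add: continuous_map_in_subtopology)
    then have "continuous_map D0 (subtopology T' (hf_carrier F' - {hf_zero F'}))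
            ((\<lambda>(x, t). H x t) \<circ> (\<lambda>z. (fst z e, snd z)))"
      using subtopology_zero_coarse[OF oT', of F'] by simp
    then have c3: "continuous_map D0 T' ((\<lambda>(x, t). H x t) \<circ> (\<lambda>z. (fst z e, snd z)))"
      by (simp add: continuous_map_in_subtopology)
    show ?thesis
    proof (rule continuous_map_eq[OF c3])
      fix z assume "z \<in> topspace D0"
      then obtain \<psi> s where z: "z = (\<psi>, s)" "\<psi> \<in> A" "s \<in> {0..1}" using tD0 by auto
      show "((\<lambda>(x, t). H x t) \<circ> (\<lambda>z. (fst z e, snd z))) z = \<Phi> z e"
        unfolding \<Phi>_def using z(1) gp_comp_in[OF e, of "\<lambda>x. H x s" \<psi>] by simp
    qed
  qed
  have Phi_cont: "continuous_map D0 X' \<Phi>"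
    unfolding X'_def continuous_map_in_subtopology
  proof
    show "continuous_map D0 P' \<Phi>" unfolding P'_def continuous_map_componentwise
    proof
      show "\<Phi> ` topspace D0 \<subseteq> extensional (tuples r n)"
        unfolding \<Phi>_def gp_comp_def by (auto split: prod.splits)
      show "\<forall>e\<in>tuples r n. continuous_map D0 T' (\<lambda>x. \<Phi> x e)" using comp_cont by blast
    qed
    show "\<Phi> \<in> topspace D0 \<rightarrow> hf_funs F' r n - {restrict (\<lambda>_. hf_zero F') (tuples r n)}"
    proof
      fix z assume "z \<in> topspace D0"
      then obtain \<psi> s where z: "z = (\<psi>, s)" "\<psi> \<in> A" "s \<in> {0..1}" using tD0 by auto
      obtain xs where xs: "xs \<in> tuples r n" "\<psi> xs \<noteq> hf_zero F" using nonzero_fun[OF Aprop(1,2)[OF z(2)]] by blast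
      have hz: "H (\<psi> xs) s \<noteq> hf_zero F'"
        using hom_nonzero[OF F F' Hh[OF z(3)] hf_funsD[OF Aprop(1)[OF z(2)] xs(1)] xs(2)] .
      have "\<Phi> z \<noteq> restrict (\<lambda>_. hf_zero F') (tuples r n)"
      proof
        assume "\<Phi> z = restrict (\<lambda>_. hf_zero F') (tuples r n)"
        then have "\<Phi> z xs = restrict (\<lambda>_. hf_zero F') (tuples r n) xs" by simp
        then show False using xs(1) hz z(1) gp_comp_in[OF xs(1), of "\<lambda>x. H x s" \<psi>] unfolding \<Phi>_def by simp
      qed
      moreover have "\<Phi> z \<in> hf_funs F' r n" unfolding z(1) \<Phi>_def
        using gp_comp_funs[OF Hh[OF z(3)] Aprop(1)[OF z(2)]] by simp
      ultimately show "\<Phi> z \<in> hf_funs F' r n - {restrict (\<lambda>_. hf_zero F') (tuples r n)}" by blast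
    qed
  qed
  have qPhi_cont: "continuous_map D0 (Real_top k F' T' F'' f' r n M) (q' \<circ> \<Phi>)"
    unfolding R' continuous_map_in_subtopology
  proof
    show "continuous_map D0 (quotient_topology X' q') (q' \<circ> \<Phi>)"
      using continuous_map_compose[OF Phi_cont continuous_quotient] .
    show "q' \<circ> \<Phi> \<in> topspace D0 \<rightarrow> Rl'"
    proof
      fix z assume "z \<in> topspace D0"
      then obtain \<psi> s where z: "z = (\<psi>, s)" "\<psi> \<in> A" "s \<in> {0..1}" using tD0 by auto
      have "(q' \<circ> \<Phi>) z = G (q \<psi>, s)" using key[OF Aprop(1)[OF z(2)] z(3)] z(1) by simp
      then show "(q' \<circ> \<Phi>) z \<in> Rl'" using range[OF Aprop(3)[OF z(2)] z(3)] by simp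
    qed
  qed

  show ?thesis
    unfolding I_def[symmetric]
  proof (intro exI conjI allI impI)
    fix \<phi> and t :: real assume a: "GP k F r n \<phi> \<and> gp_class F r n \<phi> \<in> Real_set k F F'' f r n M \<and> t \<in> {0..1}"
    then show "G (gp_class F r n \<phi>, t) = gp_class F' r n (gp_comp r n (\<lambda>x. H x t) \<phi>)"
      using key[of \<phi> t] GP_basic[of k F r n \<phi>] unfolding \<Phi>_def q_def q'_def by simp
  next
    show "continuous_map (prod_topology (Real_top k F T F'' f r n M) I) (Real_top k F' T' F'' f' r n M) G"
      unfolding continuous_map
    proof (intro conjI allI impI)
      show "G ` topspace (prod_topology (Real_top k F T F'' f r n M) I) \<subseteq> topspace (Real_top k F' T' F'' f' r n M)"
        using range unfolding tR tR' topspace_prod_topology tI by auto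
      fix U assume U: "openin (Real_top k F' T' F'' f' r n M) U"
      show "openin (prod_topology (Real_top k F T F'' f r n M) I)
              {x \<in> topspace (prod_topology (Real_top k F T F'' f r n M) I). G x \<in> U}"
        unfolding openin_prod_topology_alt
      proof (intro allI impI)
        fix C t assume "(C, t) \<in> {x \<in> topspace (prod_topology (Real_top k F T F'' f r n M) I). G x \<in> U}"
        then have C: "C \<in> Rl" and t: "t \<in> {0..1}" and GU: "G (C, t) \<in> U"
          unfolding topspace_prod_topology tR tI by auto
        obtain \<phi> where p: "GP k F r n \<phi>" "C = q \<phi>" using RlGP[OF C] by blast
        have pA: "\<phi> \<in> A" unfolding A_def using GX[OF p(1)] C p(2) by simp
        have pf: "\<phi> \<in> hf_funs F r n" using GP_basic[OF p(1)] by blast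
        define W where "W = {z \<in> topspace D0. (q' \<circ> \<Phi>) z \<in> U}"
        have oW: "openin D0 W" using qPhi_cont U unfolding continuous_map W_def by blast
        have inW: "(\<phi>, t) \<in> W"
        proof -
          have t0: "(\<phi>, t) \<in> topspace D0" unfolding tD0 using pA t by blast
          have "G (q \<phi>, t) \<in> U" using GU p(2) by blast
          then have "q' (\<Phi> (\<phi>, t)) \<in> U" unfolding key[OF pf t] .
          then show ?thesis unfolding W_def using t0 by simp
        qed
        have "\<forall>x y. (x, y) \<in> W \<longrightarrow> (\<exists>U V. openin (subtopology P A) U \<and> openin I V \<and> x \<in> U \<and> y \<in> V \<and> U \<times> V \<subseteq> W)"
          using oW unfolding D0_def by (subst (asm) openin_prod_topology_alt)
        from this[rule_format, OF inW] obtain U0' V where UV: "openin (subtopology P A) U0'" "openin I V" "\<phi> \<in> U0'" "t \<in> V" "U0' \<times> V \<subseteq> W"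
          by blast
        obtain U0 where U0: "openin P U0" "U0' = U0 \<inter> A" using UV(1) unfolding openin_subtopology by blast
        define U1 where "U1 = q ` (U0 \<inter> topspace X) \<inter> Rl"
        have "openin (quotient_topology X q) (q ` (U0 \<inter> topspace X))"
          using sat_open[OF TF U0(1)[unfolded P_def]] unfolding X_def P_def q_def .
        then have oU1: "openin (Real_top k F T F'' f r n M) U1" unfolding R U1_def openin_subtopology by blast
        have CU1: "C \<in> U1" unfolding U1_def using U0(2) UV(3) pA p(2) C unfolding A_def by blast
        have sub: "U1 \<times> V \<subseteq> {x \<in> topspace (prod_topology (Real_top k F T F'' f r n M) I). G x \<in> U}"
        proof
          fix z assume "z \<in> U1 \<times> V"
          then obtain C' s \<psi> where z: "z = (C', s)" "s \<in> V" "\<psi> \<in> U0" "\<psi> \<in> topspace X" "C' = q \<psi>" "C' \<in> Rl"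
            unfolding U1_def by blast
          have s: "s \<in> {0..1}" using openin_subset[OF UV(2)] z(2) tI by blast
          have psA: "\<psi> \<in> A" unfolding A_def using z by simp
          have "(\<psi>, s) \<in> W" using UV(5) U0(2) psA z by blast
          then have "q' (\<Phi> (\<psi>, s)) \<in> U" unfolding W_def by simp
          moreover have psf: "\<psi> \<in> hf_funs F r n" using Aprop(1)[OF psA] .
          ultimately have "G z \<in> U" using key[OF psf s] z(1,5) by simp
          then show "z \<in> {x \<in> topspace (prod_topology (Real_top k F T F'' f r n M) I). G x \<in> U}"
            unfolding topspace_prod_topology tR tI using z s by simp
        qed
        show "\<exists>U2 V2. openin (Real_top k F T F'' f r n M) U2 \<and> openin I V2 \<and> C \<in> U2 \<and> t \<in> V2 \<and>
               U2 \<times> V2 \<subseteq> {x \<in> topspace (prod_topology (Real_top k F T F'' f r n M) I). G x \<in> U}"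
          using oU1 UV(2) CU1 UV(4) sub by blast
      qed
    qed
  qed
qed

end
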